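(* Let $X$ be a discrete source, $f$ a deterministic encoder, $Y=f(X)$ the bitstream with alphabet $\mathcal{Y}$, and $g$ a deterministic decoder with reconstruction $\hat{X}=g(Y)$. If the codec $(f,g)$ is MSE optimal, then for all $y_1,y_2\in\mathcal{Y}$, $y_1\neq y_2$ implies $g(y_1)\neq g(y_2)$.
   Context: A codec is MSE optimal if it is optimal in the rate-distortion sense with distortion measured by mean squared error $\mathbb{E}\|X-\hat{X}\|^2$ and rate measured by the entropy of the bitstream $Y$: no other codec attains the same (or smaller) MSE at a strictly lower rate. The alphabet $\mathcal{Y}$ consists of the bitstream values occurring with positive probability. *)

theory Defs
  imports "HOL-Probability.Probability"
begin

text \<open>Shannon entropy (in bits) of a discrete distribution, as an extended
  nonnegative real (it may be infinite for countably infinite alphabets).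
  Terms with probability zero contribute 0.\<close>
definition entropy_pmf :: "'b pmf \<Rightarrow> ennreal" where
  "entropy_pmf q = (\<integral>\<^sup>+ y. ennreal (- pmf q y * log 2 (pmf q y)) \<partial>count_space UNIV)"

definition rate :: "'a pmf \<Rightarrow> ('a \<Rightarrow> 'b) \<Rightarrow> ennreal" where
  "rate p f = entropy_pmf (map_pmf f p)"

definition mse :: "'a::real_normed_vector pmf \<Rightarrow> ('a \<Rightarrow> 'b) \<Rightarrow> ('b \<Rightarrow> 'a) \<Rightarrow> ennreal" where
  "mse p f g = (\<integral>\<^sup>+ x. ennreal ((norm (x - g (f x)))\<^sup>2) \<partial>measure_pmf p)"

definition mse_optimal :: "'a::real_normed_vector pmf \<Rightarrow> ('a \<Rightarrow> 'b) \<Rightarrow> ('b \<Rightarrow> 'a) \<Rightarrow> bool" where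
  "mse_optimal p f g \<longleftrightarrow>
     \<not> (\<exists>(f' :: 'a \<Rightarrow> 'b) (g' :: 'b \<Rightarrow> 'a).
            mse p f' g' \<le> mse p f g \<and> rate p f' < rate p f)"

end

theory Submission
  imports Defs
begin

lemma split_int:
  fixes h :: "'b \<Rightarrow> ennreal"
  assumes "y1 \<noteq> y2"
  shows "(\<integral>\<^sup>+ y. h y \<partial>count_space UNIV) =
     (h y1 + h y2) + (\<integral>\<^sup>+ y. h y * indicator (- {y1,y2}) y \<partial>count_space UNIV)"
proof -
  have "(\<integral>\<^sup>+ y. h y \<partial>count_space UNIV) = set_nn_integral (count_space UNIV) ({y1,y2} \<union> - {y1,y2}) h"
    by simp
  also have "\<dots> = set_nn_integral (count_space UNIV) {y1,y2} h + set_nn_integral (count_space UNIV) (- {y1,y2}) h"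
    by (rule nn_integral_disjoint_pair_countspace) auto
  also have "set_nn_integral (count_space UNIV) {y1,y2} h = h y1 + h y2"
    using assms by (subst nn_integral_indicator_finite) auto
  finally show ?thesis by (simp add: mult.commute)
qed

theorem theorem3:
  fixes p :: "'a::real_normed_vector pmf" and f :: "'a \<Rightarrow> 'b" and g :: "'b \<Rightarrow> 'a"
  assumes "mse_optimal p f g"
    and "rate p f < \<infinity>"
    and "y1 \<in> set_pmf (map_pmf f p)" and "y2 \<in> set_pmf (map_pmf f p)"
    and "y1 \<noteq> y2"
  shows "g y1 \<noteq> g y2"
proof
  assume eq: "g y1 = g y2"
  define m where "m = (\<lambda>y. if y = y2 then y1 else y)"
  define f' where "f' = m \<circ> f"
  define q where "q = map_pmf f p"
  have q': "map_pmf f' p = map_pmf m q" unfolding q_def f'_def by (simp add: pmf.map_comp)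
  define a where "a = pmf q y1"
  define b where "b = pmf q y2"
  have a0: "a > 0" using assms(3) unfolding a_def q_def by (simp add: pmf_positive)
  have b0: "b > 0" using assms(4) unfolding b_def q_def by (simp add: pmf_positive)
  have ab1: "a + b \<le> 1"
  proof -
    have "measure_pmf.prob q {y1,y2} = a + b"
      using assms(5) by (simp add: measure_measure_pmf_finite a_def b_def)
    then show ?thesis by (metis measure_pmf.prob_le_1)
  qed
  have p1: "pmf (map_pmf m q) y1 = a + b"
  proof -
    have "m -` {y1} = {y1,y2}" unfolding m_def using assms(5) by (auto split: if_splits)
    then show ?thesis using assms(5) by (simp add: pmf_map measure_measure_pmf_finite a_def b_def)
  qed
  have p2: "pmf (map_pmf m q) y2 = 0"
  proof -
    have "m -` {y2} = {}" unfolding m_def using assms(5) by (auto split: if_splits)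
    then show ?thesis by (simp add: pmf_map)
  qed
  have p3: "pmf (map_pmf m q) y = pmf q y" if "y \<notin> {y1,y2}" for y
  proof -
    have "m -` {y} = {y}" unfolding m_def using that by (auto split: if_splits)
    then show ?thesis by (simp add: pmf_map measure_pmf_single)
  qed
  define r where "r = map_pmf m q"
  have mse_eq: "mse p f' g = mse p f g"
    unfolding mse_def f'_def m_def using eq by (intro nn_integral_cong) auto
  define R where "R = (\<integral>\<^sup>+ y. ennreal (- pmf q y * log 2 (pmf q y)) * indicator (- {y1,y2}) y \<partial>count_space UNIV)"
  have R': "(\<integral>\<^sup>+ y. ennreal (- pmf r y * log 2 (pmf r y)) * indicator (- {y1,y2}) y \<partial>count_space UNIV) = R"
    unfolding R_def r_def by (intro nn_integral_cong) (auto simp: p3 split: split_indicator)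
  have rf: "rate p f = (ennreal (- a * log 2 a) + ennreal (- b * log 2 b)) + R"
    unfolding rate_def entropy_pmf_def R_def a_def b_def q_def[symmetric]
    by (rule split_int[OF assms(5)])
  have rf': "rate p f' = (ennreal (- (a+b) * log 2 (a+b)) + ennreal 0) + R"
    unfolding rate_def entropy_pmf_def q' r_def[symmetric]
    by (subst split_int[OF assms(5)], subst R') (simp add: p1 p2 r_def)
  have Rfin: "R \<noteq> \<top>" using assms(2) rf by (auto simp: top_unique)
  have la: "log 2 a < log 2 (a+b)" using a0 b0 by simp
  have lb: "log 2 b < log 2 (a+b)" using a0 b0 by simp
  have la0: "log 2 a \<le> 0" using a0 b0 ab1 by simp
  have lb0: "log 2 b \<le> 0" using a0 b0 ab1 by simp
  define A where "A = - a * log 2 a"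
  define B where "B = - b * log 2 b"
  define L where "L = - (a+b) * log 2 (a+b)"
  have lt: "L < A + B"
    using mult_strict_left_mono[OF la a0] mult_strict_left_mono[OF lb b0]
    unfolding A_def B_def L_def by (simp add: algebra_simps)
  have A0: "0 \<le> A" unfolding A_def using a0 la0 by (simp add: mult_nonneg_nonpos)
  have B0: "0 \<le> B" unfolding B_def using b0 lb0 by (simp add: mult_nonneg_nonpos)
  have L0: "0 \<le> L"
  proof -
    have "log 2 (a+b) \<le> 0" using a0 b0 ab1 by simp
    then have "(a+b) * log 2 (a+b) \<le> 0" using a0 b0 by (intro mult_nonneg_nonpos) auto
    moreover have "L = - ((a+b) * log 2 (a+b))" unfolding L_def by (rule mult_minus_left)
    ultimately show ?thesis by linarith
  qed
  have "ennreal L < ennreal (A + B)" using lt L0 by (intro ennreal_lessI) auto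
  also have "ennreal (A + B) = ennreal A + ennreal B" using A0 B0 by (rule ennreal_plus)
  finally have "ennreal L + ennreal 0 < ennreal A + ennreal B" by simp
  then have "ennreal (- (a+b) * log 2 (a+b)) + ennreal 0 < ennreal (- a * log 2 a) + ennreal (- b * log 2 b)"
    unfolding A_def B_def L_def .
  then have "rate p f' < rate p f"
    unfolding rf rf' using Rfin by (simp only: ennreal_add_left_cancel_less add.commute[of _ R]) simp
  then show False using assms(1) mse_eq unfolding mse_optimal_def by (metis order_refl)
qed

end
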